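(* For every integer $h\ge0$, let $\mathrm{Horiz}_h(z)=\sum_{n\ge0}a_{n,h}z^n$, where $a_{n,h}$ is the number of Motzkin paths of length $n$ of height exactly $h$ that have at least one horizontal step on level $h$, and let $\mathrm{NoHoriz}_h(z)=\sum_{n\ge0}b_{n,h}z^n$, where $b_{n,h}$ is the number of Motzkin paths of length $n$ of height exactly $h$ that have no horizontal step on level $h$. Then $$\mathrm{Horiz}_h(z)=(1+v+v^2)(1-v^{-2})\Big[\frac{v^{2h+4}}{1-v^{2h+4}}-\frac{v^{2h+3}}{1-v^{2h+3}}\Big],$$ $$\mathrm{NoHoriz}_h(z)=(1+v+v^2)(1-v^{-2})\Big[\frac{v^{2h+3}}{1-v^{2h+3}}-\frac{v^{2h+2}}{1-v^{2h+2}}\Big].$$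
   Context: A Motzkin path of length $n$ is a sequence of $n$ steps, each an up-step $(1,1)$, a down-step $(1,-1)$ or a horizontal step $(1,0)$, starting at $(0,0)$, ending at $(n,0)$, and never going below the $x$-axis. Its height is the maximal $y$-coordinate reached. A horizontal step on level $j$ is a horizontal step from $(x,j)$ to $(x+1,j)$. Throughout, $v=v(z)=\frac{1-z-\sqrt{1-2z-3z^2}}{2z}=z+z^2+\cdots$ denotes the formal power series with $v(0)=0$ satisfying $z=\frac{v}{1+v+v^2}$; the expressions above are formal Laurent series in $v$ which are in fact power series in $v$, hence in $z$. *)

theory Defs
  imports "HOL-Computational_Algebra.Formal_Power_Series"
          "HOL-Computational_Algebra.Formal_Laurent_Series"
begin

datatype step = Up | Down | Hor

fun step_dy :: "step \<Rightarrow> int" where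
  "step_dy Up = 1" | "step_dy Down = -1" | "step_dy Hor = 0"

definition pos :: "step list \<Rightarrow> nat \<Rightarrow> int" where
  "pos p k = sum_list (map step_dy (take k p))"

definition motzkin_path :: "nat \<Rightarrow> step list \<Rightarrow> bool" where
  "motzkin_path n p \<longleftrightarrow> length p = n \<and> (\<forall>k\<le>n. 0 \<le> pos p k) \<and> pos p n = 0"

definition path_height :: "step list \<Rightarrow> int" where
  "path_height p = Max ((pos p) ` {0..length p})"

definition has_hor_on_level :: "step list \<Rightarrow> int \<Rightarrow> bool" where
  "has_hor_on_level p j \<longleftrightarrow> (\<exists>k<length p. p ! k = Hor \<and> pos p k = j)"

definition horiz_count :: "nat \<Rightarrow> nat \<Rightarrow> nat" where
  "horiz_count n h = card {p. motzkin_path n p \<and> path_height p = int h \<and> has_hor_on_level p (int h)}"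

definition nohoriz_count :: "nat \<Rightarrow> nat \<Rightarrow> nat" where
  "nohoriz_count n h = card {p. motzkin_path n p \<and> path_height p = int h \<and> \<not> has_hor_on_level p (int h)}"

definition Horiz :: "nat \<Rightarrow> real fps" where
  "Horiz h = Abs_fps (\<lambda>n. real (horiz_count n h))"

definition NoHoriz :: "nat \<Rightarrow> real fps" where
  "NoHoriz h = Abs_fps (\<lambda>n. real (nohoriz_count n h))"

text \<open>v = v(z): the unique power series with v(0) = 0 and z = v/(1+v+v^2),
  i.e. v = z (1 + v + v^2).\<close>
definition motzkin_v :: "real fps" where
  "motzkin_v = (THE v. fps_nth v 0 = 0 \<and> v = fps_X * (1 + v + v^2))"

end

theory Submission
  imports Defs
begin


lemma v_unique:
  fixes a b :: "real fps"
  assumes "a $ 0 = 0" "a = fps_X * (1 + a + a^2)" "b $ 0 = 0" "b = fps_X * (1 + b + b^2)"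
  shows "a = b"
proof (rule ccontr)
  assume ne: "a \<noteq> b"
  define d where "d = a - b"
  have dne: "d \<noteq> 0" using ne by (simp add: d_def)
  have eq: "d = fps_X * (d * (1 + a + b))"
  proof -
    have "d = fps_X * (1 + a + a^2) - fps_X * (1 + b + b^2)" using assms(2,4) d_def by simp
    also have "\<dots> = fps_X * (d * (1 + a + b))" by (simp add: d_def algebra_simps power2_eq_square)
    finally show ?thesis .
  qed
  moreover have u: "(1 + a + b) \<noteq> 0"
  proof
    assume "1 + a + b = 0" then have "(1+a+b) $ 0 = 0" by simp
    with assms show False by simp
  qed
  have s1: "subdegree (fps_X * (d * (1 + a + b))) = 1 + subdegree d + subdegree (1+a+b)" using dne u by simp
  have "subdegree d = 1 + subdegree d + subdegree (1+a+b)" using s1 eq[symmetric] by metis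
  then show False by simp
qed

lemma v_exists: "\<exists>v::real fps. v $ 0 = 0 \<and> v = fps_X * (1 + v + v^2)"
proof -
  define Q :: "real fps" where "Q = 1 + fps_X + fps_X^2"
  define g where "g = fps_X * inverse Q"
  have Q0: "Q $ 0 = 1" by (simp add: Q_def)
  have g0: "g $ 0 = 0" by (simp add: g_def)
  have g1: "g $ 1 = 1" using Q0 by (simp add: g_def)
  define v where "v = fps_inv g"
  have v0: "v $ 0 = 0" by (simp add: v_def fps_inv_def)
  have "g oo v = fps_X" using fps_inv_right[OF g0] g1 by (simp add: v_def)
  moreover have "g oo v = v * inverse (1 + v + v^2)"
    using v0 Q0 by (simp add: g_def fps_compose_mult_distrib fps_inverse_compose Q_def
         fps_compose_add_distrib fps_compose_power[symmetric])
  ultimately have e: "v * inverse (1 + v + v^2) = fps_X" by simp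
  have "(1 + v + v^2) $ 0 \<noteq> 0" using v0 by (simp add: power2_eq_square)
  then have "v = fps_X * (1 + v + v^2)"
  proof -
    have "v = v * (inverse (1 + v + v^2) * (1 + v + v^2))"
      using inverse_mult_eq_1[OF \<open>(1 + v + v^2) $ 0 \<noteq> 0\<close>] by simp
    also have "\<dots> = (v * inverse (1 + v + v^2)) * (1 + v + v^2)" by (simp only: mult.assoc)
    finally show ?thesis using e by simp
  qed
  with v0 show ?thesis by blast
qed

lemma v_props: "motzkin_v $ 0 = 0" "motzkin_v = fps_X * (1 + motzkin_v + motzkin_v^2)"
proof -
  have "fps_nth motzkin_v 0 = 0 \<and> motzkin_v = fps_X * (1 + motzkin_v + motzkin_v^2)"
    unfolding motzkin_v_def
    apply (rule theI')
    using v_exists v_unique by blast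
  then show "motzkin_v $ 0 = 0" "motzkin_v = fps_X * (1 + motzkin_v + motzkin_v^2)" by auto
qed




fun good :: "nat \<Rightarrow> bool \<Rightarrow> nat \<Rightarrow> step list \<Rightarrow> bool" where
  "good b t y [] = (y = 0)"
| "good b t y (Up # p) = (y < b \<and> good b t (Suc y) p)"
| "good b t y (Down # p) = (0 < y \<and> good b t (y - 1) p)"
| "good b t y (Hor # p) = ((y < b \<or> t) \<and> good b t y p)"

definition N :: "nat \<Rightarrow> bool \<Rightarrow> nat \<Rightarrow> nat \<Rightarrow> nat" where
  "N b t y n = card {p. length p = n \<and> good b t y p}"

lemma step_univ: "(UNIV :: step set) = {Up, Down, Hor}"
  using step.exhaust by auto

lemma fin_len: "finite {p :: step list. length p = n \<and> P p}"
proof -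
  have "{p :: step list. length p = n \<and> P p} \<subseteq> {p. set p \<subseteq> {Up,Down,Hor} \<and> length p = n}"
    using step_univ by auto
  moreover have "finite {p. set p \<subseteq> {Up,Down,Hor} \<and> length p = n}"
    by (rule finite_lists_length_eq) simp
  ultimately show ?thesis by (rule finite_subset)
qed

lemma N_0: "N b t y 0 = (if y = 0 then 1 else 0)"
proof -
  have "{p. length p = 0 \<and> good b t y p} = (if y = 0 then {[]} else {})" by auto
  then show ?thesis by (simp add: N_def)
qed

lemma N_Suc: "N b t y (Suc n) =
   (if y < b then N b t (Suc y) n else 0) + (if 0 < y then N b t (y - 1) n else 0)
   + (if y < b \<or> t then N b t y n else 0)"
proof -
  define A1 where "A1 = (if y < b then {p. length p = n \<and> good b t (Suc y) p} else {})"
  define A2 where "A2 = (if 0 < y then {p. length p = n \<and> good b t (y - 1) p} else {})"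
  define A3 where "A3 = (if y < b \<or> t then {p. length p = n \<and> good b t y p} else {})"
  have eq: "{p. length p = Suc n \<and> good b t y p} = (Cons Up ` A1 \<union> Cons Down ` A2) \<union> Cons Hor ` A3"
  proof (intro set_eqI iffI)
    fix p assume "p \<in> {p. length p = Suc n \<and> good b t y p}"
    then obtain s q where p: "p = s # q" "length q = n" "good b t y (s # q)"
      by (cases p) auto
    then show "p \<in> (Cons Up ` A1 \<union> Cons Down ` A2) \<union> Cons Hor ` A3"
      by (cases s) (auto simp: A1_def A2_def A3_def)
  next
    fix p assume "p \<in> (Cons Up ` A1 \<union> Cons Down ` A2) \<union> Cons Hor ` A3"
    then show "p \<in> {p. length p = Suc n \<and> good b t y p}"
      by (auto simp: A1_def A2_def A3_def split: if_splits)
  qed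
  have f1: "finite A1" "finite A2" "finite A3" by (simp_all add: A1_def A2_def A3_def fin_len)
  have "card {p. length p = Suc n \<and> good b t y p} = card (Cons Up ` A1 \<union> Cons Down ` A2) + card (Cons Hor ` A3)"
    unfolding eq by (rule card_Un_disjoint) (use f1 in auto)
  also have "card (Cons Up ` A1 \<union> Cons Down ` A2) = card (Cons Up ` A1) + card (Cons Down ` A2)"
    by (rule card_Un_disjoint) (use f1 in auto)
  also have "card (Cons Up ` A1) = card A1" by (rule card_image) simp
  also have "card (Cons Down ` A2) = card A2" by (rule card_image) simp
  also have "card (Cons Hor ` A3) = card A3" by (rule card_image) simp
  finally show ?thesis by (simp add: N_def A1_def A2_def A3_def)
qed

lemma pos_0[simp]: "pos p 0 = 0" by (simp add: pos_def)
lemma pos_Cons_Suc[simp]: "pos (a # p) (Suc k) = step_dy a + pos p k" by (simp add: pos_def)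

lemma good_iff:
  assumes "y \<le> b"
  shows "good b t y p \<longleftrightarrow>
    (\<forall>k\<le>length p. 0 \<le> int y + pos p k \<and> int y + pos p k \<le> int b) \<and> int y + pos p (length p) = 0
    \<and> (\<not> t \<longrightarrow> \<not> (\<exists>k<length p. p ! k = Hor \<and> int y + pos p k = int b))"
  using assms
proof (induction p arbitrary: y)
  case Nil
  then show ?case by auto
next
  case (Cons a p)
  have allS: "(\<forall>k\<le>Suc m. Q k) \<longleftrightarrow> Q 0 \<and> (\<forall>k\<le>m. Q (Suc k))" for Q and m :: nat
    apply auto subgoal for k by (cases k) auto done
  have exS: "(\<exists>k<Suc m. Q k) \<longleftrightarrow> Q 0 \<or> (\<exists>k<m. Q (Suc k))" for Q and m :: nat
    apply auto subgoal for k by (cases k) auto done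
  show ?case
  proof (cases a)
    case Up
    show ?thesis
    proof (cases "y < b")
      case True
      then show ?thesis using Cons.IH[of "Suc y"] Up by (simp add: allS exS algebra_simps)
    next
      case False
      then have "y = b" using Cons.prems by simp
      then show ?thesis using Up by (auto simp: allS)
    qed
  next
    case Down
    show ?thesis
    proof (cases "0 < y")
      case True
      then have "int (y - 1) = int y - 1" by simp
      then show ?thesis using True Cons.IH[of "y - 1"] Cons.prems Down by (simp add: allS exS algebra_simps)
    next
      case False
      then show ?thesis using Down by (auto simp: allS)
    qed
  next
    case Hor
    then show ?thesis using Cons.IH[of y] Cons.prems by (auto simp add: allS exS algebra_simps)
  qed
qed




lemma height_le: "path_height p \<le> c \<longleftrightarrow> (\<forall>k\<le>length p. pos p k \<le> c)"
  unfolding path_height_def by (subst Max_le_iff) auto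

lemma height_ge0: "0 \<le> path_height p"
  unfolding path_height_def by (rule Max_ge_iff[THEN iffD2]) (auto intro: bexI[of _ 0])

lemma hor_height: "has_hor_on_level p j \<Longrightarrow> j \<le> path_height p"
  unfolding has_hor_on_level_def path_height_def
  by (subst Max_ge_iff) auto

lemma good0: "good b t 0 p \<longleftrightarrow> motzkin_path (length p) p \<and> path_height p \<le> int b
   \<and> (\<not> t \<longrightarrow> \<not> has_hor_on_level p (int b))"
  by (subst good_iff) (auto simp: motzkin_path_def height_le has_hor_on_level_def)

definition A :: "nat \<Rightarrow> bool \<Rightarrow> nat \<Rightarrow> step list set" where
  "A b t n = {p. length p = n \<and> good b t 0 p}"

lemma A_alt: "A b t n = {p. motzkin_path n p \<and> path_height p \<le> int b
   \<and> (\<not> t \<longrightarrow> \<not> has_hor_on_level p (int b))}"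
  unfolding A_def using good0 by (auto simp: motzkin_path_def)

lemma A_fin: "finite (A b t n)" unfolding A_def by (rule fin_len)

lemma N_A: "N b t 0 n = card (A b t n)" by (simp add: N_def A_def)

lemma horiz_count_eq: "real (horiz_count n h) = real (N h True 0 n) - real (N h False 0 n)"
proof -
  have "{p. motzkin_path n p \<and> path_height p = int h \<and> has_hor_on_level p (int h)} = A h True n - A h False n"
    unfolding A_alt using hor_height by fastforce
  moreover have "A h False n \<subseteq> A h True n" unfolding A_alt by auto
  ultimately show ?thesis unfolding horiz_count_def N_A
    by (simp add: card_Diff_subset A_fin card_mono of_nat_diff)
qed

lemma nohoriz_count_eq: "real (nohoriz_count n h) = real (N h False 0 n) - (if h = 0 then 0 else real (N (h - 1) True 0 n))"
proof (cases h)
  case 0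
  have "{p. motzkin_path n p \<and> path_height p = int h \<and> \<not> has_hor_on_level p (int h)} = A h False n"
    unfolding A_alt using height_ge0 0 by (auto intro: antisym)
  then show ?thesis unfolding nohoriz_count_def N_A using 0 by simp
next
  case (Suc h')
  have "{p. motzkin_path n p \<and> path_height p = int h \<and> \<not> has_hor_on_level p (int h)} = A h False n - A h' True n"
    unfolding A_alt using Suc by auto
  moreover have "A h' True n \<subseteq> A h False n" unfolding A_alt using Suc hor_height by fastforce
  ultimately show ?thesis unfolding nohoriz_count_def N_A using Suc
    by (simp add: card_Diff_subset A_fin card_mono of_nat_diff)
qed




definition mm :: "nat \<Rightarrow> bool \<Rightarrow> nat" where "mm b t = (if t then 2*b+2 else 2*b+1)"

definition EE :: "'a::comm_ring_1 \<Rightarrow> nat \<Rightarrow> nat \<Rightarrow> 'a" where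
  "EE x m y = x^y - x^(m-y)"

lemma poly_id:
  fixes x :: "'a::comm_ring_1"
  assumes "y \<le> b"
  shows "(1 + x + x^2) * EE x (mm b t) y =
     (if y = 0 then 1 - x^(mm b t + 2) else 0) +
     x * ((if y < b then EE x (mm b t) (Suc y) else 0) + (if 0 < y then EE x (mm b t) (y - 1) else 0)
          + (if y < b \<or> t then EE x (mm b t) y else 0))"
proof (cases "y < b")
  case True
  obtain d where "b = Suc (y + d)" using less_imp_Suc_add[OF True] by blast
  then have bd: "b = y + Suc d" by simp
  define s where "s = (if t then 2*d+1 else 2*d)"
  have ms: "mm b t = 2*y + s + 3" "mm b t + 2 = 2*y + s + 5"
    using bd by (auto simp: mm_def s_def)
  show ?thesis
  proof (cases y)
    case 0
    then show ?thesis using True ms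
      by (simp add: EE_def power_add power2_eq_square algebra_simps eval_nat_numeral)
  next
    case (Suc y')
    have e1: "mm b t - y = y' + s + 4" "mm b t - Suc y = y' + s + 3" "mm b t - (y - 1) = y' + s + 5"
      using ms Suc by auto
    show ?thesis using True Suc e1
      by (simp add: EE_def power_add power2_eq_square algebra_simps eval_nat_numeral)
  qed
next
  case False
  then have yb: "y = b" using assms by simp
  show ?thesis
  proof (cases t)
    case True
    show ?thesis
    proof (cases y)
      case 0
      then show ?thesis using True yb
        by (simp add: EE_def mm_def power_add power2_eq_square algebra_simps eval_nat_numeral)
    next
      case (Suc y')
      have e1: "mm b t - y = y' + 3" "mm b t - (y - 1) = y' + 4" using True yb Suc by (auto simp: mm_def)
      have nlt: "\<not> y < b" "0 < y" "y - 1 = y'" "y \<noteq> 0" using yb Suc by auto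
      show ?thesis
        apply (simp only: EE_def e1)
        apply (simp only: nlt(1) if_False simp_thms)
        using True by (simp add: nlt Suc power_add power2_eq_square algebra_simps eval_nat_numeral)
    qed
  next
    case False
    show ?thesis
    proof (cases y)
      case 0
      then show ?thesis using False yb
        by (simp add: EE_def mm_def power_add power2_eq_square algebra_simps eval_nat_numeral)
    next
      case (Suc y')
      have e1: "mm b t - y = y' + 2" "mm b t - (y - 1) = y' + 3" using False yb Suc by (auto simp: mm_def)
      have nlt: "\<not> y < b" "0 < y" "y - 1 = y'" "y \<noteq> 0" using yb Suc by auto
      show ?thesis
        apply (simp only: EE_def e1)
        apply (simp only: nlt(1) if_False simp_thms)
        using False by (simp add: nlt Suc power_add power2_eq_square algebra_simps eval_nat_numeral)
    qed
  qed
qed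




abbreviation vv where "vv \<equiv> motzkin_v"

definition phi :: "nat \<Rightarrow> bool \<Rightarrow> nat \<Rightarrow> real fps" where
  "phi b t y = (1 + vv + vv^2) * inverse (1 - vv^(mm b t + 2)) * EE vv (mm b t) y"

lemma vpow0: "(vv ^ Suc k) $ 0 = 0"
  using v_props(1) by (simp del: power_Suc add: fps_nth_power_0)

lemma R0: "(1 - vv^(k+2)) $ 0 = 1"
  using v_props(1) by (simp add: fps_nth_power_0)

lemma phi_eq:
  assumes "y \<le> b"
  shows "phi b t y = (if y = 0 then 1 else 0) + fps_X *
     ((if y < b then phi b t (Suc y) else 0) + (if 0 < y then phi b t (y - 1) else 0)
          + (if y < b \<or> t then phi b t y else 0))"
proof -
  define R where "R = 1 - vv^(mm b t + 2)"
  define Q where "Q = 1 + vv + vv^2"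
  define c where "c = Q * inverse R"
  define S where "S = (if y < b then EE vv (mm b t) (Suc y) else 0) + (if 0 < y then EE vv (mm b t) (y - 1) else 0)
          + (if y < b \<or> t then EE vv (mm b t) y else 0)"
  have RR: "R * inverse R = 1" unfolding R_def by (rule inverse_mult_eq_1') (subst R0, simp)
  have Rne: "R \<noteq> 0"
  proof
    assume "R = 0" then have "R $ 0 = 0" by simp
    moreover have "R $ 0 = 1" unfolding R_def by (rule R0)
    ultimately show False by simp
  qed
  have XQ: "fps_X * Q = vv" unfolding Q_def by (rule v_props(2)[symmetric])
  have ph: "phi b t z = c * EE vv (mm b t) z" for z unfolding phi_def c_def Q_def R_def by simp
  have sum: "((if y < b then phi b t (Suc y) else 0) + (if 0 < y then phi b t (y - 1) else 0)
          + (if y < b \<or> t then phi b t y else 0)) = c * S"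
    unfolding S_def ph by (simp add: distrib_left)
  have "R * phi b t y = Q * EE vv (mm b t) y"
  proof -
    have "R * phi b t y = (R * inverse R) * Q * EE vv (mm b t) y" unfolding ph c_def by (simp only: mult.assoc mult.left_commute)
    then show ?thesis using RR by simp
  qed
  also have "\<dots> = (if y = 0 then R else 0) + vv * S"
    using poly_id[OF assms, of vv t] unfolding Q_def R_def S_def by simp
  also have "\<dots> = R * ((if y = 0 then 1 else 0) + fps_X * (c * S))"
  proof -
    have "R * (fps_X * (c * S)) = (R * inverse R) * (fps_X * Q) * S" unfolding c_def by (simp add: algebra_simps)
    also have "\<dots> = vv * S" using RR XQ by simp
    finally have e: "R * (fps_X * (c * S)) = vv * S" .
    have "R * ((if y = 0 then 1 else 0) + fps_X * (c * S)) = R * (if y = 0 then 1 else 0) + R * (fps_X * (c * S))"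
      by (rule distrib_left)
    also have "\<dots> = (if y = 0 then R else 0) + vv * S" using e by simp
    finally show ?thesis by simp
  qed
  finally have "R * phi b t y = R * ((if y = 0 then 1 else 0) + fps_X * (c * S))" .
  then have "phi b t y = (if y = 0 then 1 else 0) + fps_X * (c * S)" using mult_left_cancel[OF Rne] by blast
  then show ?thesis unfolding sum .
qed

lemma coef_lem: "((if P then 1 else 0) + fps_X * ((if P1 then f1 else 0) + (if P2 then f2 else 0) + (if P3 then f3 else 0))) $ Suc n
   = (if P1 then f1 $ n else 0) + (if P2 then f2 $ n else 0) + (if P3 then (f3::real fps) $ n else 0)"
proof -
  have h1: "(if P then 1 else 0 :: real fps) $ Suc n = 0" by (cases P) simp_all
  have h2: "(if Q then f else 0 :: real fps) $ m = (if Q then f $ m else 0)" for Q f m by (cases Q) simp_all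
  show ?thesis by (simp only: fps_add_nth fps_X_mult_nth h2 fps_one_nth nat.distinct diff_Suc_1 if_False if_cancel add_0_left)
qed

lemma coef0_lem: "((if P then 1 else 0) + fps_X * (f::real fps)) $ 0 = (if P then 1 else 0)"
proof -
  have h2: "(if Q then f else 0 :: real fps) $ m = (if Q then f $ m else 0)" for Q f m by (cases Q) simp_all
  show ?thesis by (simp only: fps_add_nth fps_X_mult_nth h2 fps_one_nth simp_thms(6) if_True add_0_right)
qed

lemma phi_N: "y \<le> b \<Longrightarrow> phi b t y $ n = real (N b t y n)"
proof (induction n arbitrary: y)
  case 0
  have "phi b t y $ 0 = ((if y = 0 then 1 else 0) + fps_X *
     ((if y < b then phi b t (Suc y) else 0) + (if 0 < y then phi b t (y - 1) else 0)
          + (if y < b \<or> t then phi b t y else 0))) $ 0"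
    by (subst phi_eq[OF 0]) (rule refl)
  also have "\<dots> = (if y = 0 then 1 else 0)" by (simp only: coef0_lem)
  finally show ?case by (simp add: N_0)
next
  case (Suc n)
  have "phi b t y $ Suc n = ((if y = 0 then 1 else 0) + fps_X *
     ((if y < b then phi b t (Suc y) else 0) + (if 0 < y then phi b t (y - 1) else 0)
          + (if y < b \<or> t then phi b t y else 0))) $ Suc n"
    by (subst phi_eq[OF Suc.prems]) (rule refl)
  also have "\<dots> = (if y < b then phi b t (Suc y) $ n else 0) + (if 0 < y then phi b t (y - 1) $ n else 0)
          + (if y < b \<or> t then phi b t y $ n else 0)" by (simp only: coef_lem)
  also have "\<dots> = (if y < b then real (N b t (Suc y) n) else 0) + (if 0 < y then real (N b t (y - 1) n) else 0)
          + (if y < b \<or> t then real (N b t y n) else 0)"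
  proof -
    have a1: "(if y < b then phi b t (Suc y) $ n else 0) = (if y < b then real (N b t (Suc y) n) else 0)"
      using Suc.IH[of "Suc y"] by simp
    have a2: "(if 0 < y then phi b t (y - 1) $ n else 0) = (if 0 < y then real (N b t (y - 1) n) else 0)"
      using Suc.IH[of "y - 1"] Suc.prems by simp
    have a3: "phi b t y $ n = real (N b t y n)" using Suc.IH[of y] Suc.prems by simp
    show ?thesis unfolding a1 a2 a3 ..
  qed
  also have "\<dots> = real (N b t y (Suc n))"
  proof -
    have rif: "real (if P then a else 0) = (if P then real a else 0)" for P a by simp
    show ?thesis by (simp only: N_Suc of_nat_add rif)
  qed
  finally show ?case .
qed




lemma Horiz_eq: "Horiz h = phi h True 0 - phi h False 0"
  by (rule fps_ext) (simp add: Horiz_def horiz_count_eq phi_N)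

lemma NoHoriz_eq: "NoHoriz h = phi h False 0 - (if h = 0 then 0 else phi (h - 1) True 0)"
  by (rule fps_ext) (simp add: NoHoriz_def nohoriz_count_eq phi_N)

lemma v1: "vv $ 1 = 1"
proof -
  have "vv $ 1 = (fps_X * (1 + vv + vv^2)) $ 1" by (subst v_props(2)) (rule refl)
  also have "\<dots> = 1" using v_props(1) by (simp add: fps_X_mult_nth power2_eq_square)
  finally show ?thesis .
qed

lemma w_ne: "fps_to_fls vv \<noteq> 0"
proof
  assume "fps_to_fls vv = 0" then have "vv = 0" by simp
  then show False using v1 by simp
qed

lemma onem_ne: "1 - fps_to_fls vv ^ Suc k \<noteq> 0"
proof -
  have c0: "(1 - vv ^ Suc k) $ 0 = 1" using v_props(1) by (simp add: fps_nth_power_0 del: power_Suc)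
  have ne: "1 - vv ^ Suc k \<noteq> 0"
  proof
    assume "1 - vv ^ Suc k = 0"
    then have "(1 - vv ^ Suc k) $ 0 = 0" by (simp only: fps_zero_nth)
    then show False using c0 by simp
  qed
  have "fps_to_fls (1 - vv ^ Suc k) = 1 - fps_to_fls vv ^ Suc k" by (simp only: fps_to_fls_minus fps_one_to_fls fps_to_fls_power)
  moreover have "fps_to_fls (1 - vv ^ Suc k) \<noteq> 0" using ne by (simp only: fps_to_fls_eq_0_iff not_False_eq_True)
  ultimately show ?thesis by simp
qed

lemma phi0_fls:
  "fps_to_fls (phi b t 0) = (1 + fps_to_fls vv + fps_to_fls vv ^ 2) * (1 - fps_to_fls vv ^ mm b t)
      / (1 - fps_to_fls vv ^ (mm b t + 2))"
proof -
  define R where "R = 1 - vv^(mm b t + 2)"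
  have RR: "inverse R * R = 1" unfolding R_def by (rule inverse_mult_eq_1) (subst R0, simp)
  have "phi b t 0 * R = (1 + vv + vv^2) * (1 - vv ^ mm b t) * (inverse R * R)"
    unfolding phi_def EE_def R_def by (simp only: mult_ac diff_zero power_0)
  then have e: "phi b t 0 * R = (1 + vv + vv^2) * (1 - vv ^ mm b t)" using RR by simp
  have "fps_to_fls (phi b t 0) * (1 - fps_to_fls vv ^ (mm b t + 2)) =
        (1 + fps_to_fls vv + fps_to_fls vv ^ 2) * (1 - fps_to_fls vv ^ mm b t)"
    using arg_cong[OF e, of fps_to_fls] unfolding R_def
    by (simp add: fls_times_fps_to_fls fps_to_fls_power)
  moreover have "1 - fps_to_fls vv ^ (mm b t + 2) \<noteq> 0" using onem_ne[of "mm b t + 1"] by simp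
  ultimately show ?thesis by (simp add: field_simps)
qed

lemma key:
  fixes w :: "'a::field"
  assumes w: "w \<noteq> 0" and D: "1 - w^(j+2) \<noteq> 0"
  shows "(1+w+w^2)*(1-1/w^2)*(w^(j+2)/(1-w^(j+2))) = (1+w+w^2)*(1-w^j)/(1-w^(j+2)) - (1+w+w^2)"
proof -
  define u where "u = w^j"
  define D where "D = 1 - w^(j+2)"
  have Dne: "D \<noteq> 0" using D by (simp add: D_def)
  have Du: "D = 1 - u*w^2" by (simp only: D_def u_def power_add)
  have h1: "(1-1/w^2)*(w^(j+2)) = (w^2-1)*u"
  proof -
    have a: "w^(j+2) = u*w^2" by (simp only: u_def power_add)
    have b: "w^2/w^2 = 1" using w by simp
    have "(1-1/w^2)*(u*w^2) = u*w^2 - u*(w^2/w^2)" by (simp add: algebra_simps)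
    also have "\<dots> = (w^2-1)*u" using b by (simp add: algebra_simps)
    finally show ?thesis using a by simp
  qed
  have "(1+w+w^2)*(1-1/w^2)*(w^(j+2)/(1-w^(j+2))) = (1+w+w^2)*((1-1/w^2)*(w^(j+2)))/D"
    by (simp add: D_def)
  also have "\<dots> = (1+w+w^2)*((w^2-1)*u)/D" by (simp only: h1)
  also have "\<dots> = (1+w+w^2)*((1 - u) - D)/D" by (simp add: Du algebra_simps)
  also have "\<dots> = (1+w+w^2)*(1-u)/D - (1+w+w^2)" using Dne by (simp add: field_simps)
  finally show ?thesis by (simp add: D_def u_def)
qed



theorem mainTheorem2:
  fixes h :: nat
  defines "w \<equiv> fps_to_fls motzkin_v"
  shows "fps_to_fls (Horiz h) =
           (1 + w + w^2) * (1 - 1 / w^2) *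
           (w^(2*h+4) / (1 - w^(2*h+4)) - w^(2*h+3) / (1 - w^(2*h+3)))
     \<and> fps_to_fls (NoHoriz h) =
           (1 + w + w^2) * (1 - 1 / w^2) *
           (w^(2*h+3) / (1 - w^(2*h+3)) - w^(2*h+2) / (1 - w^(2*h+2)))"
proof -
  have wne: "w \<noteq> 0" unfolding w_def by (rule w_ne)
  have one: "1 - w^(j+2) \<noteq> 0" for j using onem_ne[of "j+1"] unfolding w_def by simp
  define K where "K j = (1 + w + w^2) * (1 - w^j) / (1 - w^(j+2)) - (1 + w + w^2)" for j
  have k: "(1 + w + w^2) * (1 - 1 / w^2) * (w^(j+2) / (1 - w^(j+2))) = K j" for j
    unfolding K_def by (rule key[OF wne one])
  have P: "fps_to_fls (phi b t 0) = (1 + w + w^2) * (1 - w^(mm b t)) / (1 - w^(mm b t + 2))" for b t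
    unfolding w_def by (rule phi0_fls)
  have dist: "c * (x - y) = c * x - c * y" for c x y :: "real fls" by (rule right_diff_distrib)
  have T1: "(1 + w + w^2) * (1 - 1 / w^2) * (w^(2*h+4) / (1 - w^(2*h+4)) - w^(2*h+3) / (1 - w^(2*h+3)))
     = K (2*h+2) - K (2*h+1)"
  proof -
    have a: "2*h+2+2 = 2*h+4" "2*h+1+2 = 2*h+3" by simp_all
    show ?thesis using k[of "2*h+2", unfolded a(1)] k[of "2*h+1", unfolded a(2)]
      by (simp only: dist)
  qed
  have T2: "(1 + w + w^2) * (1 - 1 / w^2) * (w^(2*h+3) / (1 - w^(2*h+3)) - w^(2*h+2) / (1 - w^(2*h+2)))
     = K (2*h+1) - K (2*h)"
  proof -
    have a: "2*h+1+2 = 2*h+3" "2*h+2 = 2*h+2" by simp_all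
    show ?thesis using k[of "2*h+1", unfolded a(1)] k[of "2*h"]
      by (simp only: dist)
  qed
  have H: "fps_to_fls (Horiz h) = K (2*h+2) - K (2*h+1)"
    unfolding Horiz_eq fps_to_fls_minus P K_def by (simp add: mm_def algebra_simps)
  have NH: "fps_to_fls (NoHoriz h) = K (2*h+1) - K (2*h)"
  proof (cases h)
    case 0
    show ?thesis unfolding NoHoriz_eq fps_to_fls_minus P K_def using 0 by (simp add: mm_def)
  next
    case (Suc h')
    have nh: "NoHoriz h = phi h False 0 - phi h' True 0" unfolding NoHoriz_eq using Suc by simp
    show ?thesis unfolding nh fps_to_fls_minus P K_def using Suc
      by (simp add: mm_def algebra_simps)
  qed
  show ?thesis using H NH T1 T2 by simp
qed

end
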